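(* Let $z^0\in X$, $\gamma\in(0,2)$, $\delta\in[0,1/2)$, and let $\{\sigma_k\},\{\eta_k\}$ be nonnegative with $\sum_k\eta_k<\infty$, $\inf_k\sigma_k>0$; let $z^{k+1}$ be an output of IGPPAstep$(z^k,\sigma_k,\eta_k,\delta,\gamma,M)$ for all $k\ge0$. Assume $T$ satisfies the bounded metric subregularity condition, let $\bar z^0$ be a point of $\Omega$ nearest to $z^0$ in $\|\cdot\|_M$, let $r\ge\|\bar z^0\|+\frac{1}{\lambda_{\min}(M)}(\operatorname{dist}_M(z^0,\Omega)+\gamma\sum_k\eta_k)$ and $\kappa_r>0$ with $\operatorname{dist}(z,\Omega)\le\kappa_r\operatorname{dist}(0,T(z))$ for $\|z\|\le r$. Let $\alpha>0$ be such that $\rho:=\frac{1}{1-\delta}\Big(\sqrt{1-\frac{\min\{\gamma,2\gamma-\gamma^2\}\alpha^2}{\alpha^2+1}}+\delta\big(\frac{\min\{\gamma,1\}}{\sqrt{\alpha^2+1}}+1\big)\Big)<1.$ If $\sigma_k\ge\kappa_r\alpha$ for all $k\ge0$, then $\operatorname{dist}_M(z^k,\Omega)\le\rho^k\operatorname{dist}_M(z^0,\Omega)$ for all $k\ge0$.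
   Context: $X$ is a finite-dimensional real Hilbert space; $T:X\rightrightarrows X$ is maximal monotone with $\Omega:=T^{-1}(0)\neq\emptyset$. $M$ is self-adjoint positive definite with $\lambda_{\max}(M)=1$; $\|z\|_M=\sqrt{\langle z,Mz\rangle}$, $\operatorname{dist}_M(z,D)=\min_{d\in D}\|d-z\|_M$, $\operatorname{dist}=\operatorname{dist}_I$. $\mathcal{J}_{\sigma M^{-1}T}:=(I+\sigma M^{-1}T)^{-1}$. $z^+$ is an output of IGPPAstep$(z,\sigma,\eta,\delta,\gamma,M)$ if $z^+=\gamma w+(1-\gamma)z$ for some $w$ with $\|w-\mathcal{J}_{\sigma M^{-1}T}(z)\|_M\le\min\{\eta,\delta\|w-z\|_M\}$. Bounded metric subregularity: for every $r>0$ there is $\kappa_r>0$ with $\operatorname{dist}(z,\Omega)\le\kappa_r\operatorname{dist}(0,T(z))$ for all $\|z\|\le r$. *)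

theory Defs
  imports "HOL-Analysis.Analysis"
begin

text \<open>Set-valued operators on a finite-dimensional real Hilbert space are modelled as
  functions T :: 'a \<Rightarrow> 'a set (graph: v \<in> T x).\<close>

definition monotone_operator :: "('a::euclidean_space \<Rightarrow> 'a set) \<Rightarrow> bool" where
  "monotone_operator T \<longleftrightarrow>
     (\<forall>x y u v. u \<in> T x \<longrightarrow> v \<in> T y \<longrightarrow> (x - y) \<bullet> (u - v) \<ge> 0)"

definition maximal_monotone :: "('a::euclidean_space \<Rightarrow> 'a set) \<Rightarrow> bool" where
  "maximal_monotone T \<longleftrightarrow> monotone_operator T \<and>
     (\<forall>x u. (\<forall>y v. v \<in> T y \<longrightarrow> (x - y) \<bullet> (u - v) \<ge> 0) \<longrightarrow> u \<in> T x)"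

definition zeros :: "('a::euclidean_space \<Rightarrow> 'a set) \<Rightarrow> 'a set" where
  "zeros T = {z. 0 \<in> T z}"

definition self_adjoint_pd :: "('a::euclidean_space \<Rightarrow> 'a) \<Rightarrow> bool" where
  "self_adjoint_pd M \<longleftrightarrow> linear M \<and> (\<forall>x y. M x \<bullet> y = x \<bullet> M y)
     \<and> (\<forall>x. x \<noteq> 0 \<longrightarrow> x \<bullet> M x > 0)"

definition eigenvalues_op :: "('a::euclidean_space \<Rightarrow> 'a) \<Rightarrow> real set" where
  "eigenvalues_op M = {l. \<exists>x. x \<noteq> 0 \<and> M x = l *\<^sub>R x}"

definition lambda_max :: "('a::euclidean_space \<Rightarrow> 'a) \<Rightarrow> real" where
  "lambda_max M = Sup (eigenvalues_op M)"

definition lambda_min :: "('a::euclidean_space \<Rightarrow> 'a) \<Rightarrow> real" where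
  "lambda_min M = Inf (eigenvalues_op M)"

definition normM :: "('a::euclidean_space \<Rightarrow> 'a) \<Rightarrow> 'a \<Rightarrow> real" where
  "normM M z = sqrt (z \<bullet> M z)"

definition distM :: "('a::euclidean_space \<Rightarrow> 'a) \<Rightarrow> 'a \<Rightarrow> 'a set \<Rightarrow> real" where
  "distM M z D = Inf {normM M (d - z) | d. d \<in> D}"

text \<open>Resolvent (I + sigma M^{-1} T)^{-1}(z): the point p with z \<in> p + sigma (M^{-1} T)(p),
  where (M^{-1} T)(p) = {w. M w \<in> T p}.\<close>
definition resolventM ::
  "('a::euclidean_space \<Rightarrow> 'a set) \<Rightarrow> ('a \<Rightarrow> 'a) \<Rightarrow> real \<Rightarrow> 'a \<Rightarrow> 'a" where
  "resolventM T M \<sigma> z = (THE p. \<exists>w. M w \<in> T p \<and> z = p + \<sigma> *\<^sub>R w)"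

definition igppa_step ::
  "('a::euclidean_space \<Rightarrow> 'a set) \<Rightarrow> ('a \<Rightarrow> 'a) \<Rightarrow> 'a \<Rightarrow> real \<Rightarrow> real \<Rightarrow> real \<Rightarrow> real \<Rightarrow> 'a \<Rightarrow> bool" where
  "igppa_step T M z \<sigma> \<eta> \<delta> \<gamma> z' \<longleftrightarrow>
     (\<exists>w. z' = \<gamma> *\<^sub>R w + (1 - \<gamma>) *\<^sub>R z \<and>
          normM M (w - resolventM T M \<sigma> z) \<le> min \<eta> (\<delta> * normM M (w - z)))"

text \<open>Metric subregularity estimate on the ball of radius r, with the convention
  dist(0, emptyset) = +infinity (points outside dom T impose no constraint).\<close>
definition subreg_on_ball :: "('a::euclidean_space \<Rightarrow> 'a set) \<Rightarrow> real \<Rightarrow> real \<Rightarrow> bool" where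
  "subreg_on_ball T r \<kappa> \<longleftrightarrow>
     (\<forall>z. norm z \<le> r \<and> T z \<noteq> {} \<longrightarrow> infdist z (zeros T) \<le> \<kappa> * infdist 0 (T z))"

definition bounded_metric_subregular :: "('a::euclidean_space \<Rightarrow> 'a set) \<Rightarrow> bool" where
  "bounded_metric_subregular T \<longleftrightarrow> (\<forall>r>0. \<exists>\<kappa>>0. subreg_on_ball T r \<kappa>)"

end

theory Submission
  imports Defs "HOL-Analysis.Analysis"
begin


lemma quad_nonneg_lin0:
  fixes a b :: real
  assumes "\<And>t. 0 \<le> a * t^2 + b * t"
  shows "b = 0"
proof (rule ccontr)
  assume b: "b \<noteq> 0"
  define s where "s = 1 / (\<bar>a\<bar> + 1)"
  have s0: "s > 0" unfolding s_def by (simp add: add_pos_nonneg)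
  have as: "a * s < 1" unfolding s_def by (simp add: field_simps)
  have "0 \<le> a * (- b * s)^2 + b * (- b * s)" using assms by blast
  also have "\<dots> = b^2 * s * (a * s - 1)" by (simp add: power2_eq_square algebra_simps)
  also have "\<dots> < 0" using b s0 as by (simp add: mult_pos_neg)
  finally show False by simp
qed

lemma rayleigh_min:
  fixes N :: "'a::euclidean_space \<Rightarrow> 'a"
  assumes lin: "linear N" and sym: "\<And>x y. N x \<bullet> y = x \<bullet> N y"
  shows "\<exists>x0 \<mu>. x0 \<noteq> 0 \<and> N x0 = \<mu> *\<^sub>R x0 \<and> (\<forall>x. \<mu> * (x \<bullet> x) \<le> x \<bullet> N x)"
proof -
  have cont: "continuous_on (sphere 0 1) (\<lambda>x. x \<bullet> N x)"
    using lin[unfolded linear_conv_bounded_linear] by (intro continuous_intros linear_continuous_on)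
  have ne: "sphere (0::'a) 1 \<noteq> {}" by simp
  obtain x0 where x0: "x0 \<in> sphere 0 1" and min: "\<And>y. y \<in> sphere 0 1 \<Longrightarrow> x0 \<bullet> N x0 \<le> y \<bullet> N y"
    using continuous_attains_inf[OF compact_sphere ne cont] by blast
  define \<mu> where "\<mu> = x0 \<bullet> N x0"
  have nx0: "x0 \<bullet> x0 = 1" using x0 by (simp add: dot_square_norm)
  have ge: "\<mu> * (x \<bullet> x) \<le> x \<bullet> N x" for x
  proof (cases "x = 0")
    case True then show ?thesis by (simp add: linear_0[OF lin])
  next
    case False
    define y where "y = (1 / norm x) *\<^sub>R x"
    have "y \<in> sphere 0 1" using False by (simp add: y_def)
    then have "\<mu> \<le> y \<bullet> N y" using min \<mu>_def by blast
    also have "y \<bullet> N y = (x \<bullet> N x) / (norm x)^2"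
      by (simp add: y_def linear_scale[OF lin] power2_eq_square)
    finally have "\<mu> * (norm x)^2 \<le> x \<bullet> N x" using False by (simp add: field_simps)
    then show ?thesis by (simp add: dot_square_norm)
  qed
  define y where "y = N x0 - \<mu> *\<^sub>R x0"
  have "\<And>t. 0 \<le> (y \<bullet> N y - \<mu> * (y \<bullet> y)) * t^2 + (2 * (y \<bullet> y)) * t"
  proof -
    fix t :: real
    have "0 \<le> (x0 + t *\<^sub>R y) \<bullet> N (x0 + t *\<^sub>R y) - \<mu> * ((x0 + t *\<^sub>R y) \<bullet> (x0 + t *\<^sub>R y))"
      using ge[of "x0 + t *\<^sub>R y"] by simp
    also have "\<dots> = (y \<bullet> N y - \<mu> * (y \<bullet> y)) * t^2 + (2 * (y \<bullet> y)) * t"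
    proof -
      have e1: "x0 \<bullet> N y = y \<bullet> N x0" by (metis sym inner_commute)
      have e2: "y \<bullet> y = y \<bullet> N x0 - \<mu> * (y \<bullet> x0)" by (simp add: y_def inner_diff_right)
      show ?thesis
        by (simp add: linear_add[OF lin] linear_scale[OF lin] inner_add_left inner_add_right
            power2_eq_square algebra_simps e1 e2 \<mu>_def nx0 inner_commute)
    qed
    finally show "0 \<le> (y \<bullet> N y - \<mu> * (y \<bullet> y)) * t^2 + (2 * (y \<bullet> y)) * t" .
  qed
  then have "2 * (y \<bullet> y) = 0" by (rule quad_nonneg_lin0)
  then have "y = 0" by simp
  then have "N x0 = \<mu> *\<^sub>R x0" by (simp add: y_def)
  moreover have "x0 \<noteq> 0" using x0 by auto
  ultimately show ?thesis using ge by blast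
qed

locale spd =
  fixes M :: "'a::euclidean_space \<Rightarrow> 'a"
  assumes pd: "self_adjoint_pd M"
begin

lemma lin: "linear M" using pd by (simp add: self_adjoint_pd_def)
lemma sym: "M x \<bullet> y = x \<bullet> M y" using pd by (simp add: self_adjoint_pd_def)
lemma pos: "x \<noteq> 0 \<Longrightarrow> x \<bullet> M x > 0" using pd by (simp add: self_adjoint_pd_def)
lemma nonneg: "0 \<le> x \<bullet> M x" using pos[of x] by (cases "x = 0") (auto simp: linear_0[OF lin])
lemma Madd: "M (x + y) = M x + M y" by (rule linear_add[OF lin])
lemma Mdiff: "M (x - y) = M x - M y" by (rule linear_diff[OF lin])
lemma Mscale: "M (c *\<^sub>R x) = c *\<^sub>R M x" by (rule linear_scale[OF lin])
lemma Mneg: "M (- x) = - M x" by (rule linear_neg[OF lin])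
lemma M0: "M 0 = 0" by (rule linear_0[OF lin])
lemma cont: "continuous_on S M"
  using lin[unfolded linear_conv_bounded_linear] by (intro linear_continuous_on)
lemma symN: "x \<bullet> M y = y \<bullet> M x" by (metis sym inner_commute)

lemma eig_min: "\<exists>x0 \<mu>. x0 \<noteq> 0 \<and> M x0 = \<mu> *\<^sub>R x0 \<and> (\<forall>x. \<mu> * (x \<bullet> x) \<le> x \<bullet> M x)"
  by (rule rayleigh_min[OF lin sym])

lemma eig_max: "\<exists>x1 \<mu>. x1 \<noteq> 0 \<and> M x1 = \<mu> *\<^sub>R x1 \<and> (\<forall>x. x \<bullet> M x \<le> \<mu> * (x \<bullet> x))"
proof -
  have l: "linear (\<lambda>x. - M x)" using lin by (simp add: linear_compose_neg)
  have s2: "\<And>x y. - M x \<bullet> y = x \<bullet> - M y" using sym by simp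
  obtain x1 \<mu> where h: "x1 \<noteq> 0" "- M x1 = \<mu> *\<^sub>R x1" "\<forall>x. \<mu> * (x \<bullet> x) \<le> x \<bullet> - M x"
    using rayleigh_min[OF l s2] by blast
  have h2: "M x1 = (-\<mu>) *\<^sub>R x1" using h(2) by (metis minus_minus scaleR_minus_left)
  have h3: "x \<bullet> M x \<le> (-\<mu>) * (x \<bullet> x)" for x using h(3)[rule_format, of x] by (simp add: inner_minus_right)
  show ?thesis using h(1) h2 h3 by blast
qed

lemma eigval: "M x = l *\<^sub>R x \<Longrightarrow> l * (x \<bullet> x) = x \<bullet> M x"
  by simp

lemma lambda_min_prop: "lambda_min M > 0 \<and> (\<forall>x. lambda_min M * (x \<bullet> x) \<le> x \<bullet> M x)"
proof -
  obtain x0 \<mu> where x0: "x0 \<noteq> 0" "M x0 = \<mu> *\<^sub>R x0" "\<forall>x. \<mu> * (x \<bullet> x) \<le> x \<bullet> M x"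
    using eig_min by blast
  have mem: "\<mu> \<in> eigenvalues_op M" using x0 by (auto simp: eigenvalues_op_def)
  have lb: "\<mu> \<le> l" if lin_: "l \<in> eigenvalues_op M" for l
  proof -
    obtain x where x: "x \<noteq> 0" "M x = l *\<^sub>R x" using lin_ unfolding eigenvalues_op_def by blast
    have "l * (x \<bullet> x) = x \<bullet> M x" using x(2) by simp
    then have "\<mu> * (x \<bullet> x) \<le> l * (x \<bullet> x)" using x0(3) by simp
    moreover have "x \<bullet> x > 0" using x(1) by simp
    ultimately show ?thesis by simp
  qed
  have "lambda_min M = \<mu>" unfolding lambda_min_def by (rule cInf_eq_minimum[OF mem lb])
  moreover have "\<mu> > 0"
  proof -
    have "\<mu> * (x0 \<bullet> x0) = x0 \<bullet> M x0" using x0 by simp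
    moreover have "x0 \<bullet> x0 > 0" using x0(1) by simp
    ultimately show ?thesis using pos[OF x0(1)] by (metis zero_less_mult_pos2)
  qed
  ultimately show ?thesis using x0 by simp
qed

lemma lambda_max_prop: "\<forall>x. x \<bullet> M x \<le> lambda_max M * (x \<bullet> x)"
proof -
  obtain x0 \<mu> where x0: "x0 \<noteq> 0" "M x0 = \<mu> *\<^sub>R x0" "\<forall>x. x \<bullet> M x \<le> \<mu> * (x \<bullet> x)"
    using eig_max by blast
  have mem: "\<mu> \<in> eigenvalues_op M" using x0 by (auto simp: eigenvalues_op_def)
  have ub: "l \<le> \<mu>" if lin_: "l \<in> eigenvalues_op M" for l
  proof -
    obtain x where x: "x \<noteq> 0" "M x = l *\<^sub>R x" using lin_ unfolding eigenvalues_op_def by blast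
    have "l * (x \<bullet> x) = x \<bullet> M x" using x(2) by simp
    then have "l * (x \<bullet> x) \<le> \<mu> * (x \<bullet> x)" using x0(3) by simp
    then show ?thesis using x by simp
  qed
  have "lambda_max M = \<mu>" unfolding lambda_max_def by (rule cSup_eq_maximum[OF mem ub])
  then show ?thesis using x0 by simp
qed

lemma lambda_min_le_max: "lambda_min M \<le> lambda_max M"
proof -
  define x :: 'a where "x = (SOME i. i \<in> Basis)"
  have "x \<noteq> 0" unfolding x_def by (simp add: SOME_Basis nonzero_Basis)
  then have "x \<bullet> x > 0" by simp
  moreover have "lambda_min M * (x \<bullet> x) \<le> lambda_max M * (x \<bullet> x)"
    using lambda_min_prop lambda_max_prop order.trans by blast
  ultimately show ?thesis by simp
qed

lemma CS: "(x \<bullet> M y)^2 \<le> (x \<bullet> M x) * (y \<bullet> M y)"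
proof (cases "y = 0")
  case True then show ?thesis by (simp add: M0)
next
  case False
  define a where "a = y \<bullet> M y"
  define b where "b = x \<bullet> M y"
  define c where "c = x \<bullet> M x"
  have a: "a > 0" using pos[OF False] a_def by simp
  define t where "t = - b / a"
  have "0 \<le> (x + t *\<^sub>R y) \<bullet> M (x + t *\<^sub>R y)" by (rule nonneg)
  also have "\<dots> = c + 2 * t * b + t^2 * a"
    by (simp add: Madd Mscale inner_add_left inner_add_right a_def b_def c_def power2_eq_square
        algebra_simps symN[of y x])
  also have "\<dots> = c - b^2 / a" using a by (simp add: t_def field_simps power2_eq_square)
  finally have "b^2 / a \<le> c" by simp
  then have "b^2 \<le> c * a" using a by (simp add: field_simps)
  then show ?thesis by (simp add: a_def b_def c_def)
qed

lemma normM_sq: "(normM M x)^2 = x \<bullet> M x"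
  using real_sqrt_pow2[OF nonneg[of x]] by (simp add: normM_def)
lemma normM_nonneg: "normM M x \<ge> 0" unfolding normM_def using nonneg by simp
lemma normM_minus: "normM M (- x) = normM M x" by (simp add: normM_def Mneg)
lemma normM_commute: "normM M (x - y) = normM M (y - x)"
  by (metis minus_diff_eq normM_minus)
lemma normM_scale: "normM M (c *\<^sub>R x) = \<bar>c\<bar> * normM M x"
proof -
  have "(c *\<^sub>R x) \<bullet> M (c *\<^sub>R x) = c^2 * (x \<bullet> M x)" by (simp add: Mscale power2_eq_square)
  then show ?thesis by (simp add: normM_def real_sqrt_mult)
qed
lemma normM_0: "normM M 0 = 0" by (simp add: normM_def M0)

lemma abs_ip_le: "\<bar>x \<bullet> M y\<bar> \<le> normM M x * normM M y"
proof -
  have "\<bar>x \<bullet> M y\<bar>^2 \<le> (normM M x * normM M y)^2"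
    using CS by (simp add: power_mult_distrib normM_sq)
  then show ?thesis using normM_nonneg by (meson abs_ge_zero mult_nonneg_nonneg power2_le_imp_le)
qed

lemma normM_expand: "(normM M (x + y))^2 = (normM M x)^2 + 2 * (x \<bullet> M y) + (normM M y)^2"
  by (simp add: normM_sq Madd inner_add_left inner_add_right symN[of y x])

lemma normM_triangle: "normM M (x + y) \<le> normM M x + normM M y"
proof -
  have "(normM M (x + y))^2 \<le> (normM M x + normM M y)^2"
    using abs_ip_le[of x y] by (simp add: normM_expand power2_sum)
  then show ?thesis using normM_nonneg by (meson add_nonneg_nonneg power2_le_imp_le)
qed

lemma normM_triangle_diff: "normM M (x - z) \<le> normM M (x - y) + normM M (y - z)"
  using normM_triangle[of "x - y" "y - z"] by simp

end



lemma mono_comb: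
  fixes F :: "('a::euclidean_space \<times> 'a) set" and m :: "'a \<times> 'a \<Rightarrow> real"
  assumes fin: "finite F"
    and mono: "\<And>i j. i \<in> F \<Longrightarrow> j \<in> F \<Longrightarrow> 0 \<le> (fst i - fst j) \<bullet> (snd i - snd j)"
    and m0: "\<And>i. i \<in> F \<Longrightarrow> 0 \<le> m i"
    and pe: "(\<Sum>i\<in>F. m i) *\<^sub>R p = (\<Sum>i\<in>F. m i *\<^sub>R fst i)"
  shows "(\<Sum>i\<in>F. m i * ((p - fst i) \<bullet> snd i)) \<le> 0"
proof -
  define S where "S = (\<Sum>i\<in>F. m i)"
  define A where "A = (\<Sum>i\<in>F. \<Sum>j\<in>F. m i * m j * ((fst j - fst i) \<bullet> snd i))"
  have key: "S * (\<Sum>i\<in>F. m i * ((p - fst i) \<bullet> snd i)) = A"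
  proof -
    have E: "S *\<^sub>R p - S *\<^sub>R fst i = (\<Sum>j\<in>F. m j *\<^sub>R (fst j - fst i))" for i
      using pe by (simp add: S_def scaleR_sum_left scaleR_diff_right sum_subtractf)
    have Ei: "S * ((p - fst i) \<bullet> snd i) = (\<Sum>j\<in>F. m j * ((fst j - fst i) \<bullet> snd i))" for i
    proof -
      have "S * ((p - fst i) \<bullet> snd i) = (S *\<^sub>R p - S *\<^sub>R fst i) \<bullet> snd i"
        by (simp add: inner_diff_left algebra_simps)
      also have "\<dots> = (\<Sum>j\<in>F. m j *\<^sub>R (fst j - fst i)) \<bullet> snd i" by (simp only: E)
      also have "\<dots> = (\<Sum>j\<in>F. m j * ((fst j - fst i) \<bullet> snd i))" by (simp add: inner_sum_left)
      finally show ?thesis .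
    qed
    have "S * (\<Sum>i\<in>F. m i * ((p - fst i) \<bullet> snd i)) = (\<Sum>i\<in>F. m i * (S * ((p - fst i) \<bullet> snd i)))"
      by (simp add: sum_distrib_left mult.left_commute)
    also have "\<dots> = (\<Sum>i\<in>F. m i * (\<Sum>j\<in>F. m j * ((fst j - fst i) \<bullet> snd i)))" by (simp only: Ei)
    also have "\<dots> = A" by (simp add: A_def sum_distrib_left mult.assoc)
    finally show ?thesis .
  qed
  have A2: "A = (\<Sum>i\<in>F. \<Sum>j\<in>F. m i * m j * ((fst i - fst j) \<bullet> snd j))"
    unfolding A_def by (subst sum.swap) (intro sum.cong refl, simp only: mult.commute)
  have "2 * A = (\<Sum>i\<in>F. \<Sum>j\<in>F. m i * m j * ((fst j - fst i) \<bullet> snd i) + m i * m j * ((fst i - fst j) \<bullet> snd j))"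
    unfolding mult_2 by (subst (2) A2) (simp only: A_def sum.distrib[symmetric])
  also have "\<dots> = (\<Sum>i\<in>F. \<Sum>j\<in>F. - (m i * m j * ((fst i - fst j) \<bullet> (snd i - snd j))))"
    by (intro sum.cong refl) (simp add: algebra_simps inner_diff_left inner_diff_right)
  also have "\<dots> \<le> 0"
    by (intro sum_nonpos) (simp add: m0 mono zero_le_mult_iff)
  finally have A0: "A \<le> 0" by simp
  show ?thesis
  proof (cases "S = 0")
    case True
    then have "\<forall>i\<in>F. m i = 0" using sum_nonneg_eq_0_iff[OF fin, of m] m0 unfolding S_def by simp
    then show ?thesis by simp
  next
    case False
    then have "S > 0" using m0 S_def by (simp add: order_less_le sum_nonneg)
    moreover have "S * (\<Sum>i\<in>F. m i * ((p - fst i) \<bullet> snd i)) \<le> 0" using key A0 by simp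
    ultimately show ?thesis by (simp add: mult_le_0_iff)
  qed
qed

context spd begin

lemma bl: "bounded_linear M" using lin linear_conv_bounded_linear by blast

lemma contM_comp [continuous_intros]: "continuous_on S g \<Longrightarrow> continuous_on S (\<lambda>x. M (g x))"
  by (rule bounded_linear.continuous_on[OF bl])

lemma minty_finite:
  assumes mono: "monotone_operator T" and sig: "\<sigma> > 0"
    and fin: "finite F" and ne: "F \<noteq> {}" and inF: "\<And>i. i \<in> F \<Longrightarrow> snd i \<in> T (fst i)"
  shows "\<exists>p. \<forall>i\<in>F. 0 \<le> (p - fst i) \<bullet> (M (z - p) - \<sigma> *\<^sub>R snd i)"
proof -
  define g where "g i p = (p - fst i) \<bullet> (M (z - p) - \<sigma> *\<^sub>R snd i)" for i p
  define mm where "mm i p = max 0 (- g i p)" for i p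
  define S where "S p = (\<Sum>i\<in>F. mm i p)" for p
  define f where "f p = (1 / (1 + S p)) *\<^sub>R (p + (\<Sum>i\<in>F. mm i p *\<^sub>R fst i))" for p
  define K where "K = convex hull (fst ` F)"
  have mm0: "mm i p \<ge> 0" for i p by (simp add: mm_def)
  have S0: "S p \<ge> 0" for p by (simp add: S_def sum_nonneg mm0)
  have Kc: "compact K" unfolding K_def
    by (intro compact_convex_hull finite_imp_compact finite_imageI fin)
  have Kv: "convex K" unfolding K_def by simp
  have FK: "fst i \<in> K" if "i \<in> F" for i
    unfolding K_def using that hull_subset by fastforce
  have Kne: "K \<noteq> {}" using ne FK by blast
  have contg: "continuous_on K (g i)" for i
    unfolding g_def by (intro continuous_intros)
  have contS: "continuous_on K S"
    unfolding S_def mm_def by (intro continuous_intros contg)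
  have den: "1 + (\<Sum>i\<in>F. max 0 (- g i x)) \<noteq> 0" for x
    using S0[of x] unfolding S_def mm_def by linarith
  have contf: "continuous_on K f"
    unfolding f_def mm_def
    by (intro continuous_intros contg contS) (use den S0 in \<open>auto simp: add_nonneg_eq_0_iff\<close>)
  have fK: "f p \<in> K" if p: "p \<in> K" for p
  proof (cases "S p = 0")
    case True
    then have "\<forall>i\<in>F. mm i p = 0" using sum_nonneg_eq_0_iff[OF fin, of "\<lambda>i. mm i p"] mm0 S_def by simp
    then show ?thesis using True p by (simp add: f_def)
  next
    case False
    then have Sp: "S p > 0" using S0 order_less_le by metis
    define q where "q = (\<Sum>i\<in>F. (mm i p / S p) *\<^sub>R fst i)"
    have qK: "q \<in> K" unfolding q_def
    proof (rule convex_sum[OF fin Kv])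
      show "(\<Sum>i\<in>F. mm i p / S p) = 1" using Sp by (simp add: S_def sum_divide_distrib[symmetric])
    qed (use mm0 Sp FK in auto)
    have sq: "S p *\<^sub>R q = (\<Sum>i\<in>F. mm i p *\<^sub>R fst i)"
      unfolding q_def scaleR_sum_right using Sp by simp
    have "f p = (1 / (1 + S p)) *\<^sub>R p + (S p / (1 + S p)) *\<^sub>R q"
      unfolding f_def sq[symmetric] by (simp add: scaleR_add_right)
    also have "\<dots> \<in> K"
    proof (rule convexD[OF Kv p qK])
      have "1 + S p > 0" using S0[of p] by linarith
      then show "1 / (1 + S p) + S p / (1 + S p) = 1" by (simp add: add_divide_distrib[symmetric])
    qed (use S0[of p] in auto)
    finally show ?thesis .
  qed
  obtain p where pK: "p \<in> K" and fp: "f p = p"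
    using brouwer[OF Kc Kv Kne contf] fK by blast
  have Sp1: "1 + S p > 0" using S0 by (simp add: add_pos_nonneg)
  have peq: "S p *\<^sub>R p = (\<Sum>i\<in>F. mm i p *\<^sub>R fst i)"
  proof -
    have "(1 + S p) *\<^sub>R f p = p + (\<Sum>i\<in>F. mm i p *\<^sub>R fst i)"
      unfolding f_def using Sp1 by simp
    then have "(1 + S p) *\<^sub>R p = p + (\<Sum>i\<in>F. mm i p *\<^sub>R fst i)" using fp by simp
    then show ?thesis by (simp add: scaleR_add_left)
  qed
  show ?thesis
  proof (rule exI[of _ p], rule ccontr)
    assume "\<not> (\<forall>i\<in>F. 0 \<le> (p - fst i) \<bullet> (M (z - p) - \<sigma> *\<^sub>R snd i))"
    then obtain j where jF: "j \<in> F" and gj: "g j p < 0" unfolding g_def by force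
    have "0 < (\<Sum>i\<in>F. - (mm i p * g i p))"
    proof (rule sum_pos2[OF fin jF])
      show "0 < - (mm j p * g j p)" using gj by (simp add: mm_def mult_neg_neg)
    next
      fix i show "0 \<le> - (mm i p * g i p)" by (simp add: mm_def max_def mult_le_0_iff)
    qed
    then have neg: "(\<Sum>i\<in>F. mm i p * g i p) < 0" by (simp add: sum_negf)
    have split: "mm i p * g i p = mm i p * ((p - fst i) \<bullet> M (z - p)) - \<sigma> * (mm i p * ((p - fst i) \<bullet> snd i))" for i
      by (simp add: g_def inner_diff_right algebra_simps)
    have first: "(\<Sum>i\<in>F. mm i p * ((p - fst i) \<bullet> M (z - p))) = 0"
    proof -
      have "(\<Sum>i\<in>F. mm i p * ((p - fst i) \<bullet> M (z - p))) = (\<Sum>i\<in>F. mm i p *\<^sub>R (p - fst i)) \<bullet> M (z - p)"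
        by (simp add: inner_sum_left)
      also have "(\<Sum>i\<in>F. mm i p *\<^sub>R (p - fst i)) = S p *\<^sub>R p - (\<Sum>i\<in>F. mm i p *\<^sub>R fst i)"
        by (simp add: S_def scaleR_diff_right sum_subtractf scaleR_sum_left)
      also have "\<dots> = 0" using peq by simp
      finally show ?thesis by simp
    qed
    have second: "(\<Sum>i\<in>F. mm i p * ((p - fst i) \<bullet> snd i)) \<le> 0"
    proof (rule mono_comb[OF fin])
      fix i j assume "i \<in> F" "j \<in> F"
      then show "0 \<le> (fst i - fst j) \<bullet> (snd i - snd j)"
        using mono inF unfolding monotone_operator_def by blast
    next
      show "(\<Sum>i\<in>F. mm i p) *\<^sub>R p = (\<Sum>i\<in>F. mm i p *\<^sub>R fst i)" using peq S_def by simp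
    qed (rule mm0)
    have "(\<Sum>i\<in>F. mm i p * g i p) = 0 - \<sigma> * (\<Sum>i\<in>F. mm i p * ((p - fst i) \<bullet> snd i))"
      by (simp add: split sum_subtractf first sum_distrib_left)
    also have "\<dots> \<ge> 0" using second sig by (simp add: mult_nonneg_nonpos)
    finally show False using neg by simp
  qed
qed

end



context spd begin

lemma lmin_pos: "lambda_min M > 0" using lambda_min_prop by blast
lemma lmin_le: "lambda_min M * (x \<bullet> x) \<le> x \<bullet> M x" using lambda_min_prop by blast

lemma normM_ge_sqrt: "sqrt (lambda_min M) * norm x \<le> normM M x"
proof -
  have "(sqrt (lambda_min M) * norm x)^2 = lambda_min M * (x \<bullet> x)"
    using lmin_pos by (simp add: power_mult_distrib dot_square_norm)
  also have "\<dots> \<le> (normM M x)^2" using lmin_le normM_sq by simp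
  finally show ?thesis using normM_nonneg by (meson power2_le_imp_le)
qed

lemma dist_le_normM: "x \<bullet> M x \<le> lambda_max M * (x \<bullet> x)" using lambda_max_prop by blast

lemma continuous_normM [continuous_intros]:
  "continuous_on S g \<Longrightarrow> continuous_on S (\<lambda>x. normM M (g x))"
  unfolding normM_def by (intro continuous_intros)

lemma distM_le: "d \<in> S \<Longrightarrow> distM M z S \<le> normM M (d - z)"
  unfolding distM_def by (rule cInf_lower) (auto intro: bdd_belowI[of _ 0] simp: normM_nonneg)

lemma proj_exists:
  assumes cl: "closed S" and ne: "S \<noteq> {}"
  shows "\<exists>s\<in>S. normM M (s - z) = distM M z S"
proof -
  obtain d0 where d0: "d0 \<in> S" using ne by blast
  define c where "c = sqrt (lambda_min M)"
  have c0: "c > 0" using lmin_pos by (simp add: c_def)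
  define R where "R = normM M (d0 - z) / c"
  define K where "K = S \<inter> cball z R"
  have Kc: "compact K" unfolding K_def using cl by (intro closed_Int_compact) auto
  have d0K: "d0 \<in> K"
  proof -
    have "c * norm (d0 - z) \<le> normM M (d0 - z)" using normM_ge_sqrt c_def by simp
    then have "norm (d0 - z) \<le> R" using c0 by (simp add: R_def field_simps)
    then show ?thesis using d0 by (simp add: K_def dist_norm norm_minus_commute)
  qed
  have contf: "continuous_on K (\<lambda>s. normM M (s - z))" by (intro continuous_intros)
  obtain s1 where s1: "s1 \<in> K" and smin: "\<And>s. s \<in> K \<Longrightarrow> normM M (s1 - z) \<le> normM M (s - z)"
    using continuous_attains_inf[OF Kc _ contf] d0K by blast
  have all: "normM M (s1 - z) \<le> normM M (s - z)" if s: "s \<in> S" for s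
  proof (cases "s \<in> K")
    case True then show ?thesis using smin by blast
  next
    case False
    then have "norm (s - z) > R" using s by (simp add: K_def dist_norm norm_minus_commute)
    then have "c * norm (s - z) > normM M (d0 - z)" using c0 by (simp add: R_def field_simps)
    moreover have "c * norm (s - z) \<le> normM M (s - z)" using normM_ge_sqrt c_def by simp
    moreover have "normM M (s1 - z) \<le> normM M (d0 - z)" using smin d0K by blast
    ultimately show ?thesis by linarith
  qed
  have "distM M z S = normM M (s1 - z)"
    unfolding distM_def
    by (rule cInf_eq_minimum) (use s1 K_def all in auto)
  then show ?thesis using s1 K_def by auto
qed

lemma distM_nonneg: "closed S \<Longrightarrow> S \<noteq> {} \<Longrightarrow> distM M z S \<ge> 0"
  using proj_exists normM_nonneg by metis

end


lemma zeros_char: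
  assumes "maximal_monotone T"
  shows "zeros T = {x. \<forall>y v. v \<in> T y \<longrightarrow> 0 \<le> (x - y) \<bullet> (0 - v)}"
  using assms proof (intro set_eqI iffI)
  fix x assume "x \<in> zeros T"
  then show "x \<in> {x. \<forall>y v. v \<in> T y \<longrightarrow> 0 \<le> (x - y) \<bullet> (0 - v)}"
    using assms unfolding maximal_monotone_def monotone_operator_def zeros_def by blast
next
  fix x assume "x \<in> {x. \<forall>y v. v \<in> T y \<longrightarrow> 0 \<le> (x - y) \<bullet> (0 - v)}"
  then show "x \<in> zeros T"
    using assms unfolding maximal_monotone_def zeros_def by blast
qed

lemma zeros_closed:
  assumes "maximal_monotone T"
  shows "closed (zeros T)"
proof -
  have "zeros T = (\<Inter>i\<in>{i. snd i \<in> T (fst i)}. {x. 0 \<le> (x - fst i) \<bullet> (0 - snd i)})"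
    unfolding zeros_char[OF assms] by auto
  also have "closed \<dots>"
    by (intro closed_INT ballI closed_Collect_le continuous_intros)
  finally show ?thesis .
qed

lemma zeros_convex:
  assumes mm: "maximal_monotone T"
  shows "convex (zeros T)"
proof (rule convexI)
  fix x1 x2 :: 'a and u v :: real
  assume x1: "x1 \<in> zeros T" and x2: "x2 \<in> zeros T" and u: "0 \<le> u" and v: "0 \<le> v" and uv: "u + v = 1"
  have h1: "0 \<le> (x1 - y) \<bullet> (0 - w)" if "w \<in> T y" for y w
    using x1 that unfolding zeros_char[OF mm] by blast
  have h2: "0 \<le> (x2 - y) \<bullet> (0 - w)" if "w \<in> T y" for y w
    using x2 that unfolding zeros_char[OF mm] by blast
  have "0 \<le> (u *\<^sub>R x1 + v *\<^sub>R x2 - y) \<bullet> (0 - w)" if w: "w \<in> T y" for y w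
  proof -
    have e: "(u *\<^sub>R x1 + v *\<^sub>R x2 - y) = u *\<^sub>R (x1 - y) + v *\<^sub>R (x2 - y)"
      using uv by (simp add: algebra_simps flip: scaleR_add_left)
    have "(u *\<^sub>R x1 + v *\<^sub>R x2 - y) \<bullet> (0 - w) = u * ((x1 - y) \<bullet> (0 - w)) + v * ((x2 - y) \<bullet> (0 - w))"
      unfolding e by (simp only: inner_add_left inner_scaleR_left)
    also have "\<dots> \<ge> 0" using h1[OF w] h2[OF w] u v by (intro add_nonneg_nonneg mult_nonneg_nonneg)
    finally show ?thesis .
  qed
  then show "u *\<^sub>R x1 + v *\<^sub>R x2 \<in> zeros T" unfolding zeros_char[OF mm] by blast
qed



context spd begin

lemma minty:
  assumes mm: "maximal_monotone T" and ne: "zeros T \<noteq> {}" and sig: "\<sigma> > 0"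
  shows "\<exists>p. \<forall>y v. v \<in> T y \<longrightarrow> 0 \<le> (p - y) \<bullet> (M (z - p) - \<sigma> *\<^sub>R v)"
proof -
  have mono: "monotone_operator T" using mm by (simp add: maximal_monotone_def)
  obtain y0 where y0: "0 \<in> T y0" using ne by (auto simp: zeros_def)
  define C where "C i = {p. 0 \<le> (p - fst i) \<bullet> (M (z - p) - \<sigma> *\<^sub>R snd i)}" for i
  define G where "G = {i. snd i \<in> T (fst i)}"
  have y0G: "(y0, 0) \<in> G" using y0 by (simp add: G_def)
  have bnd: "bounded (C (y0, 0))"
  proof -
    define R where "R = norm (M (z - y0)) / lambda_min M"
    have "C (y0, 0) \<subseteq> cball y0 R"
    proof
      fix p assume "p \<in> C (y0, 0)"
      then have h: "0 \<le> (p - y0) \<bullet> M (z - p)" by (simp add: C_def)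
      define u where "u = p - y0"
      have zp: "z - p = (z - y0) - u" by (simp add: u_def)
      have "lambda_min M * (u \<bullet> u) \<le> u \<bullet> M u" by (rule lmin_le)
      also have "\<dots> \<le> u \<bullet> M (z - y0)" using h unfolding zp u_def[symmetric] by (simp add: Mdiff inner_diff_right)
      also have "\<dots> \<le> norm u * norm (M (z - y0))" by (rule Cauchy_Schwarz_ineq2[THEN order_trans[OF abs_ge_self]])
      finally have ineq: "lambda_min M * (norm u)^2 \<le> norm u * norm (M (z - y0))"
        by (simp add: dot_square_norm)
      have "norm u \<le> R"
      proof (cases "norm u = 0")
        case True then show ?thesis using lmin_pos by (simp add: R_def)
      next
        case False
        then have "lambda_min M * norm u \<le> norm (M (z - y0))"
          using ineq by (simp add: power2_eq_square)
        then show ?thesis using lmin_pos by (simp add: R_def field_simps)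
      qed
      then show "p \<in> cball y0 R" by (simp add: u_def dist_norm norm_minus_commute)
    qed
    then show ?thesis using bounded_cball bounded_subset by blast
  qed
  have clo: "closed (C i)" for i
    unfolding C_def by (intro closed_Collect_le continuous_intros)
  have "\<Inter> (C ` G) \<noteq> {}"
  proof (rule closed_fip_Heine_Borel)
    show "C (y0, 0) \<in> C ` G" using y0G by blast
    show "bounded (C (y0, 0))" by (rule bnd)
    show "\<And>T. T \<in> C ` G \<Longrightarrow> closed T" using clo by blast
  next
    fix F' assume fin: "finite F'" and sub: "F' \<subseteq> C ` G"
    obtain G' where G': "G' \<subseteq> G" "finite G'" "F' = C ` G'"
      using finite_subset_image[OF fin sub] by blast
    have inG: "\<And>i. i \<in> insert (y0, 0) G' \<Longrightarrow> snd i \<in> T (fst i)" using G' y0G by (auto simp: G_def)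
    obtain p where p: "\<forall>i\<in>insert (y0, 0) G'. 0 \<le> (p - fst i) \<bullet> (M (z - p) - \<sigma> *\<^sub>R snd i)"
      using minty_finite[OF mono sig _ _ inG, where z=z] G'(2) by blast
    then have "p \<in> \<Inter> F'" using G' by (auto simp: C_def)
    then show "\<Inter> F' \<noteq> {}" by blast
  qed
  then obtain p where "p \<in> \<Inter> (C ` G)" by blast
  then have "\<forall>y v. v \<in> T y \<longrightarrow> 0 \<le> (p - y) \<bullet> (M (z - p) - \<sigma> *\<^sub>R v)"
    by (auto simp: C_def G_def)
  then show ?thesis by blast
qed

lemma resolvent:
  assumes mm: "maximal_monotone T" and ne: "zeros T \<noteq> {}" and sig: "\<sigma> > 0"
  shows "M ((1 / \<sigma>) *\<^sub>R (z - resolventM T M \<sigma> z)) \<in> T (resolventM T M \<sigma> z)"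
proof -
  have mono: "monotone_operator T" using mm by (simp add: maximal_monotone_def)
  obtain p0 where p0: "\<forall>y v. v \<in> T y \<longrightarrow> 0 \<le> (p0 - y) \<bullet> (M (z - p0) - \<sigma> *\<^sub>R v)"
    using minty[OF mm ne sig] by blast
  define w0 where "w0 = (1 / \<sigma>) *\<^sub>R (z - p0)"
  have Mw0: "M w0 \<in> T p0"
  proof -
    have "\<forall>y v. v \<in> T y \<longrightarrow> (p0 - y) \<bullet> (M w0 - v) \<ge> 0"
    proof (intro allI impI)
      fix y v assume "v \<in> T y"
      then have "0 \<le> (p0 - y) \<bullet> (M (z - p0) - \<sigma> *\<^sub>R v)" using p0 by blast
      also have "(p0 - y) \<bullet> (M (z - p0) - \<sigma> *\<^sub>R v) = \<sigma> * ((p0 - y) \<bullet> (M w0 - v))"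
      proof -
        have zw: "z - p0 = \<sigma> *\<^sub>R w0" using sig by (simp add: w0_def)
        have "M (z - p0) - \<sigma> *\<^sub>R v = \<sigma> *\<^sub>R (M w0 - v)" by (simp add: zw Mscale scaleR_diff_right)
        then show ?thesis by simp
      qed
      finally show "(p0 - y) \<bullet> (M w0 - v) \<ge> 0" using sig by (simp add: zero_le_mult_iff zero_le_divide_iff)
    qed
    then show ?thesis using mm unfolding maximal_monotone_def by blast
  qed
  have z0: "z = p0 + \<sigma> *\<^sub>R w0" using sig by (simp add: w0_def)
  have uniq: "p1 = p0" if ex1: "\<exists>w. M w \<in> T p1 \<and> z = p1 + \<sigma> *\<^sub>R w" for p1
  proof -
    obtain w1 where w1: "M w1 \<in> T p1" "z = p1 + \<sigma> *\<^sub>R w1" using ex1 by blast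
    have "0 \<le> (p1 - p0) \<bullet> (M w1 - M w0)" using mono w1(1) Mw0 unfolding monotone_operator_def by blast
    moreover have "w1 - w0 = (1 / \<sigma>) *\<^sub>R (p0 - p1)"
    proof -
      have e: "\<sigma> *\<^sub>R (w1 - w0) = p0 - p1" using w1(2) z0 by (simp add: algebra_simps)
      have "w1 - w0 = (1 / \<sigma>) *\<^sub>R (\<sigma> *\<^sub>R (w1 - w0))" using sig by simp
      then show ?thesis by (simp only: e)
    qed
    ultimately have "0 \<le> (1 / \<sigma>) * ((p1 - p0) \<bullet> M (p0 - p1))"
      by (metis Mdiff Mscale inner_scaleR_right)
    then have "0 \<le> (p1 - p0) \<bullet> M (p0 - p1)" using sig by (simp add: zero_le_mult_iff zero_le_divide_iff)
    then have "(p1 - p0) \<bullet> M (p1 - p0) \<le> 0"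
      by (metis Mneg inner_minus_right minus_diff_eq neg_0_le_iff_le)
    then show ?thesis using pos[of "p1 - p0"] by force
  qed
  have "resolventM T M \<sigma> z = p0"
    unfolding resolventM_def
    by (rule the_equality) (use Mw0 z0 uniq in blast)+
  then show ?thesis using Mw0 by (simp add: w0_def)
qed

end



lemma arith_big:
  fixes g a q e d :: real
  assumes g: "1 < g" "g < 2" and a: "a > 0" and q: "q \<ge> 0" and e: "e \<ge> 0"
    and h1: "q^2 \<le> d^2 - e^2" and h2: "a^2 * q^2 \<le> e^2"
  shows "q^2 + (g - 1) * e^2 \<le> d^2 * (1 - (2 - g) * (a^2 / (1 + a^2)))"
proof -
  define s where "s = a^2 / (1 + a^2)"
  have a2: "a^2 > 0" using a by simp
  show ?thesis
  proof (cases "e^2 \<ge> s * d^2")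
    case True
    have "q^2 + (g - 1) * e^2 \<le> d^2 - (2 - g) * e^2" using h1 by (simp add: algebra_simps)
    also have "\<dots> \<le> d^2 - (2 - g) * (s * d^2)" using True g by (simp add: mult_left_mono)
    finally show ?thesis by (simp add: s_def algebra_simps)
  next
    case False
    have "q^2 \<le> e^2 / a^2" using h2 a2 by (simp add: field_simps)
    then have "q^2 + (g - 1) * e^2 \<le> e^2 * (1 / a^2 + (g - 1))" by (simp add: algebra_simps)
    also have "\<dots> \<le> (s * d^2) * (1 / a^2 + (g - 1))"
    proof (rule mult_right_mono)
      show "e^2 \<le> s * d^2" using False by simp
      have "1 / a^2 > 0" using a2 by simp
      then show "0 \<le> 1 / a^2 + (g - 1)" using g by linarith
    qed
    also have "\<dots> = d^2 * (1 - (2 - g) * (a^2 / (1 + a^2)))"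
    proof -
      have p1: "1 + a^2 > 0" by (rule add_pos_nonneg) auto
      have e1: "s * (1 / a^2) = 1 / (1 + a^2)" using a2 p1 by (simp add: s_def field_simps)
      have e2: "1 - s = 1 / (1 + a^2)" using p1 by (simp add: s_def field_simps)
      have eq: "s * (1 / a^2 + (g - 1)) = 1 - (2 - g) * s"
        using e1 e2 by (simp add: algebra_simps)
      have "(s * d^2) * (1 / a^2 + (g - 1)) = d^2 * (s * (1 / a^2 + (g - 1)))" by (simp only: mult_ac)
      also have "\<dots> = d^2 * (1 - (2 - g) * s)" by (simp only: eq)
      finally show ?thesis by (simp only: s_def)
    qed
    finally show ?thesis .
  qed
qed

lemma arith_final:
  fixes g a dl :: real
  assumes g: "0 < g" "g < 2" and a: "a > 0" and dl: "0 \<le> dl" "dl < 1/2"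
  shows "sqrt (1 - min g (2 * g - g^2) * a^2 / (a^2 + 1)) + g * dl / (1 - dl) \<le>
    (1 / (1 - dl)) * (sqrt (1 - min g (2 * g - g^2) * a^2 / (a^2 + 1)) + dl * (min g 1 / sqrt (a^2 + 1) + 1))"
proof -
  define B where "B = 1 - min g (2 * g - g^2) * a^2 / (a^2 + 1)"
  define c where "c = min g 1 / sqrt (a^2 + 1)"
  have c0: "c \<ge> 0" using g by (simp add: c_def)
  have sB0: "sqrt B \<ge> 0"
  proof -
    have "2 * g - g^2 = 1 - (g - 1)^2" by (simp add: power2_eq_square algebra_simps)
    then have "2 * g - g^2 \<le> 1" by simp
    then have "min g (2 * g - g^2) \<le> 1" by (simp add: min_le_iff_disj)
    then have "min g (2 * g - g^2) * a^2 \<le> 1 * a^2" by (intro mult_right_mono) auto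
    moreover have "a^2 + 1 > 0" by (rule add_nonneg_pos) auto
    ultimately have "min g (2 * g - g^2) * a^2 / (a^2 + 1) \<le> 1"
      by (simp add: divide_le_eq)
    then show ?thesis by (simp add: B_def)
  qed
  have key: "g \<le> sqrt B + c + 1"
  proof (cases "g \<le> 1")
    case True then show ?thesis using sB0 c0 by linarith
  next
    case False
    have m: "min g (2 * g - g^2) = 2 * g - g^2" using False by (simp add: min_def power2_eq_square) 
    have "(g - 1)^2 \<le> B"
    proof -
      have "B - (g - 1)^2 = (2 * g - g^2) * (1 - a^2 / (a^2 + 1))"
        unfolding B_def m by (simp add: field_simps power2_eq_square)
      also have "\<dots> \<ge> 0"
      proof (intro mult_nonneg_nonneg)
        have "a^2 + 1 > 0" by (rule add_nonneg_pos) auto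
        then have "a^2 / (a^2 + 1) \<le> 1" by (simp add: divide_le_eq)
        then show "0 \<le> 1 - a^2 / (a^2 + 1)" by simp
        have "2 * g - g^2 = g * (2 - g)" by (simp add: power2_eq_square algebra_simps)
        then show "0 \<le> 2 * g - g^2" using g by simp
      qed
      finally show ?thesis by simp
    qed
    then have "g - 1 \<le> sqrt B" using False by (metis abs_of_pos diff_gt_0_iff_gt not_le real_le_rsqrt real_sqrt_abs)
    then show ?thesis using c0 by linarith
  qed
  have d1: "1 - dl > 0" using dl by simp
  have "(1 - dl) * (sqrt B + g * dl / (1 - dl)) = (1 - dl) * sqrt B + g * dl" using d1 by (simp add: field_simps)
  also have "\<dots> \<le> sqrt B + dl * (c + 1)"
  proof -
    have "g * dl \<le> (sqrt B + c + 1) * dl" using key dl by (simp add: mult_right_mono)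
    then show ?thesis using sB0 dl by (simp add: algebra_simps)
  qed
  finally have "sqrt B + g * dl / (1 - dl) \<le> (sqrt B + dl * (c + 1)) / (1 - dl)"
    using d1 by (simp add: field_simps)
  then show ?thesis by (simp add: B_def c_def)
qed



context spd begin

lemma FN:
  assumes mm: "maximal_monotone T" and ne: "zeros T \<noteq> {}" and sig: "\<sigma> > 0" and zs: "zs \<in> zeros T"
  shows "(normM M (resolventM T M \<sigma> z - zs))^2 + (normM M (z - resolventM T M \<sigma> z))^2 \<le> (normM M (z - zs))^2"
proof -
  define p where "p = resolventM T M \<sigma> z"
  have Mw: "M ((1 / \<sigma>) *\<^sub>R (z - p)) \<in> T p" using resolvent[OF mm ne sig] p_def by simp
  have z0: "0 \<in> T zs" using zs by (simp add: zeros_def)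
  have mono: "monotone_operator T" using mm by (simp add: maximal_monotone_def)
  have "0 \<le> (p - zs) \<bullet> (M ((1 / \<sigma>) *\<^sub>R (z - p)) - 0)" using mono Mw z0 unfolding monotone_operator_def by blast
  then have "0 \<le> (1 / \<sigma>) * ((p - zs) \<bullet> M (z - p))" by (simp add: Mscale)
  then have h: "0 \<le> (p - zs) \<bullet> M (z - p)" using sig by (simp add: zero_le_mult_iff zero_le_divide_iff)
  have "(normM M (z - zs))^2 = (normM M ((z - p) + (p - zs)))^2" by simp
  also have "\<dots> = (normM M (z - p))^2 + 2 * ((z - p) \<bullet> M (p - zs)) + (normM M (p - zs))^2"
    by (rule normM_expand)
  also have "(z - p) \<bullet> M (p - zs) = (p - zs) \<bullet> M (z - p)" by (rule symN)
  finally show ?thesis using h unfolding p_def by linarith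
qed

lemma relax_id:
  "(normM M ((1 - g) *\<^sub>R a + g *\<^sub>R b))^2 =
     (1 - g) * (normM M a)^2 + g * (normM M b)^2 - g * (1 - g) * (normM M (a - b))^2"
proof -
  have s: "b \<bullet> M a = a \<bullet> M b" by (rule symN)
  show ?thesis
    unfolding normM_sq
    by (simp add: Madd Mscale Mdiff inner_add_left inner_add_right inner_diff_left inner_diff_right s
        algebra_simps power2_eq_square)
qed


lemma normM_le_norm:
  assumes lmax: "lambda_max M = 1"
  shows "normM M x \<le> norm x"
proof -
  have "x \<bullet> M x \<le> x \<bullet> x" using lambda_max_prop lmax by simp
  then show ?thesis unfolding normM_def by (simp add: norm_eq_sqrt_inner)
qed

lemma norm_M_le:
  assumes lmax: "lambda_max M = 1"
  shows "norm (M x) \<le> normM M x"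
proof (cases "norm (M x) = 0")
  case True then show ?thesis using normM_nonneg by simp
next
  case False
  have "(norm (M x))^2 = x \<bullet> M (M x)" by (simp only: power2_norm_eq_inner sym)
  also have "\<dots> \<le> normM M x * normM M (M x)" using abs_ip_le[of x "M x"] by linarith
  also have "\<dots> \<le> normM M x * norm (M x)"
    by (rule mult_left_mono[OF normM_le_norm[OF lmax] normM_nonneg])
  finally have "norm (M x) * norm (M x) \<le> normM M x * norm (M x)" by (simp add: power2_eq_square)
  then show ?thesis using False by simp
qed

lemma lmin_norm:
  assumes lmax: "lambda_max M = 1"
  shows "lambda_min M * norm x \<le> normM M x"
proof -
  have l1: "lambda_min M \<le> 1" using lambda_min_le_max lmax by simp
  have s1: "sqrt (lambda_min M) \<le> 1" using l1 by simp
  have "lambda_min M = sqrt (lambda_min M) * sqrt (lambda_min M)" using lmin_pos by (simp add: less_imp_le)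
  also have "\<dots> \<le> sqrt (lambda_min M) * 1" by (rule mult_left_mono[OF s1]) (use lmin_pos in simp)
  finally have "lambda_min M \<le> sqrt (lambda_min M)" by simp
  then have "lambda_min M * norm x \<le> sqrt (lambda_min M) * norm x" by (simp add: mult_right_mono)
  also have "\<dots> \<le> normM M x" by (rule normM_ge_sqrt)
  finally show ?thesis .
qed

lemma fejer:
  assumes mm: "maximal_monotone T" and ne: "zeros T \<noteq> {}" and sig: "\<sigma> > 0"
    and g: "0 < \<gamma>" "\<gamma> < 2" and zs: "zs \<in> zeros T"
    and st: "igppa_step T M z \<sigma> \<eta> \<delta> \<gamma> z'"
  shows "normM M (z' - zs) \<le> normM M (z - zs) + \<gamma> * \<eta>"
    and "normM M (resolventM T M \<sigma> z - zs) \<le> normM M (z - zs)"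
proof -
  define p where "p = resolventM T M \<sigma> z"
  obtain w where w: "z' = \<gamma> *\<^sub>R w + (1 - \<gamma>) *\<^sub>R z"
      "normM M (w - p) \<le> min \<eta> (\<delta> * normM M (w - z))"
    using st unfolding igppa_step_def p_def by blast
  have fn: "(normM M (p - zs))^2 + (normM M (z - p))^2 \<le> (normM M (z - zs))^2"
    using FN[OF mm ne sig zs] p_def by simp
  define zg where "zg = (1 - \<gamma>) *\<^sub>R z + \<gamma> *\<^sub>R p"
  have ezg: "zg - zs = (1 - \<gamma>) *\<^sub>R (z - zs) + \<gamma> *\<^sub>R (p - zs)"
    by (simp add: zg_def scaleR_diff_right scaleR_diff_left)
  have "(normM M (zg - zs))^2 = (normM M ((1 - \<gamma>) *\<^sub>R (z - zs) + \<gamma> *\<^sub>R (p - zs)))^2"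
    by (simp only: ezg)
  also have "\<dots> = (1 - \<gamma>) * (normM M (z - zs))^2 + \<gamma> * (normM M (p - zs))^2
        - \<gamma> * (1 - \<gamma>) * (normM M (z - p))^2"
    using relax_id[of \<gamma> "z - zs" "p - zs"] by simp
  also have "\<dots> \<le> (normM M (z - zs))^2 - \<gamma> * (2 - \<gamma>) * (normM M (z - p))^2"
  proof -
    have "\<gamma> * (normM M (p - zs))^2 \<le> \<gamma> * ((normM M (z - zs))^2 - (normM M (z - p))^2)"
      using fn g by (intro mult_left_mono) auto
    then show ?thesis by (simp add: algebra_simps)
  qed
  also have "\<dots> \<le> (normM M (z - zs))^2" using g by (simp add: mult_nonneg_nonneg)
  finally have "normM M (zg - zs) \<le> normM M (z - zs)"
    by (rule power2_le_imp_le[OF _ normM_nonneg])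
  moreover have "normM M (z' - zs) \<le> normM M (zg - zs) + normM M (z' - zg)"
    using normM_triangle_diff[of z' zs zg] normM_commute[of z' zg] by linarith
  moreover have "z' - zg = \<gamma> *\<^sub>R (w - p)" by (simp add: w(1) zg_def scaleR_diff_right)
  moreover have "normM M (w - p) \<le> \<eta>" using w(2) by simp
  ultimately show "normM M (z' - zs) \<le> normM M (z - zs) + \<gamma> * \<eta>"
  proof -
    assume a1: "normM M (zg - zs) \<le> normM M (z - zs)"
      and a2: "normM M (z' - zs) \<le> normM M (zg - zs) + normM M (z' - zg)"
      and a3: "z' - zg = \<gamma> *\<^sub>R (w - p)" and a4: "normM M (w - p) \<le> \<eta>"
    have "normM M (z' - zg) = \<gamma> * normM M (w - p)" using a3 g by (simp add: normM_scale)
    also have "\<dots> \<le> \<gamma> * \<eta>" using a4 g by (simp add: mult_left_mono)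
    finally show ?thesis using a1 a2 by linarith
  qed
  show "normM M (resolventM T M \<sigma> z - zs) \<le> normM M (z - zs)"
  proof -
    have "(normM M (p - zs))^2 \<le> (normM M (z - zs))^2" using fn zero_le_power2[of "normM M (z - p)"] by linarith
    then show ?thesis unfolding p_def by (rule power2_le_imp_le[OF _ normM_nonneg])
  qed
qed

end



context spd begin

lemma contraction:
  assumes mm: "maximal_monotone T" and ne: "zeros T \<noteq> {}" and lmax: "lambda_max M = 1"
    and g: "0 < \<gamma>" "\<gamma> < 2" and dl: "0 \<le> \<delta>" "\<delta> < 1/2"
    and kap: "\<kappa> > 0" and alpha: "\<alpha> > 0" and sig: "\<kappa> * \<alpha> \<le> \<sigma>"
    and sub: "subreg_on_ball T r \<kappa>" and pr: "norm (resolventM T M \<sigma> z) \<le> r"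
    and st: "igppa_step T M z \<sigma> \<eta> \<delta> \<gamma> z'"
  shows "distM M z' (zeros T) \<le> ((1 / (1 - \<delta>)) * (sqrt (1 - min \<gamma> (2 * \<gamma> - \<gamma>^2) * \<alpha>^2 / (\<alpha>^2 + 1))
               + \<delta> * (min \<gamma> 1 / sqrt (\<alpha>^2 + 1) + 1))) * distM M z (zeros T)"
proof -
  define \<Omega> where "\<Omega> = zeros T"
  have cl: "closed \<Omega>" and cv: "convex \<Omega>" and ne': "\<Omega> \<noteq> {}"
    using zeros_closed[OF mm] zeros_convex[OF mm] ne by (auto simp: \<Omega>_def)
  have sig0: "\<sigma> > 0" using kap alpha sig by (smt (verit) mult_pos_pos)
  define d where "d = distM M z \<Omega>"
  define p where "p = resolventM T M \<sigma> z"
  define q where "q = distM M p \<Omega>"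
  define e where "e = normM M (z - p)"
  obtain zb where zb: "zb \<in> \<Omega>" "normM M (zb - z) = d" using proj_exists[OF cl ne'] d_def by blast
  obtain pb where pb: "pb \<in> \<Omega>" "normM M (pb - p) = q" using proj_exists[OF cl ne'] q_def by blast
  have d0: "d \<ge> 0" using zb normM_nonneg by metis
  have q0: "q \<ge> 0" using pb normM_nonneg by metis
  have e0: "e \<ge> 0" using normM_nonneg e_def by simp
  define P where "P = normM M (p - zb)"
  have fn: "P^2 + e^2 \<le> d^2"
    using FN[OF mm ne sig0, of zb z] zb normM_commute[of z zb] unfolding P_def e_def p_def \<Omega>_def by simp
  have qP: "q \<le> P" using distM_le[OF zb(1), of p] normM_commute[of zb p] unfolding q_def P_def by simp
  have ed: "e \<le> d"
  proof -
    have "e^2 \<le> d^2" using fn zero_le_power2[of P] by linarith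
    then show ?thesis using d0 by (rule power2_le_imp_le)
  qed
  define w0 where "w0 = (1 / \<sigma>) *\<^sub>R (z - p)"
  have Mw0: "M w0 \<in> T p" using resolvent[OF mm ne sig0] unfolding w0_def p_def by simp
  have aq: "\<alpha> * q \<le> e"
  proof -
    have "q \<le> infdist p \<Omega>"
      unfolding infdist_def using ne'
    proof (simp, intro cINF_greatest)
      fix a assume a: "a \<in> \<Omega>"
      have "q \<le> normM M (a - p)" unfolding q_def by (rule distM_le[OF a])
      also have "\<dots> \<le> norm (a - p)" by (rule normM_le_norm[OF lmax])
      finally show "q \<le> dist p a" by (simp add: dist_norm norm_minus_commute)
    qed (use ne' in auto)
    also have "\<dots> \<le> \<kappa> * infdist 0 (T p)"
      using sub pr Mw0 unfolding subreg_on_ball_def \<Omega>_def p_def by blast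
    also have "\<dots> \<le> \<kappa> * (e / \<sigma>)"
    proof -
      have "infdist 0 (T p) \<le> dist 0 (M w0)" by (rule infdist_le[OF Mw0])
      also have "\<dots> = norm (M (z - p)) / \<sigma>" using sig0 by (simp add: w0_def Mscale)
      also have "\<dots> \<le> e / \<sigma>" unfolding e_def using sig0 by (simp add: divide_right_mono norm_M_le[OF lmax])
      finally show ?thesis by (rule mult_left_mono) (use kap in auto)
    qed
    finally have "q \<le> \<kappa> * e / \<sigma>" by simp
    then have "\<sigma> * q \<le> \<kappa> * e" using sig0 by (simp add: field_simps)
    moreover have "\<kappa> * \<alpha> * q \<le> \<sigma> * q" using sig q0 by (simp add: mult_right_mono)
    ultimately have "\<kappa> * (\<alpha> * q) \<le> \<kappa> * e" by (simp add: mult.assoc)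
    then show ?thesis using kap by simp
  qed
  have h1: "q^2 \<le> d^2 - e^2"
  proof -
    have "q^2 \<le> P^2" using qP q0 by (simp add: power_mono)
    then show ?thesis using fn by linarith
  qed
  have h2: "\<alpha>^2 * q^2 \<le> e^2"
  proof -
    have "(\<alpha> * q)^2 \<le> e^2" using aq alpha q0 by (simp add: power_mono)
    then show ?thesis by (simp add: power_mult_distrib)
  qed
  define B where "B = 1 - min \<gamma> (2 * \<gamma> - \<gamma>^2) * \<alpha>^2 / (\<alpha>^2 + 1)"
  define zg where "zg = (1 - \<gamma>) *\<^sub>R z + \<gamma> *\<^sub>R p"
  have zgb: "\<exists>zs\<in>\<Omega>. (normM M (zs - zg))^2 \<le> B * d^2"
  proof (cases "\<gamma> \<le> 1")
    case True
    have m: "min \<gamma> (2 * \<gamma> - \<gamma>^2) = \<gamma>"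
      using True g by (simp add: min_def power2_eq_square)
    define zs where "zs = (1 - \<gamma>) *\<^sub>R zb + \<gamma> *\<^sub>R pb"
    have zsO: "zs \<in> \<Omega>" unfolding zs_def using True g by (intro convexD[OF cv zb(1) pb(1)]) auto
    have "zs - zg = (1 - \<gamma>) *\<^sub>R (zb - z) + \<gamma> *\<^sub>R (pb - p)"
      by (simp add: zs_def zg_def scaleR_diff_right)
    then have "(normM M (zs - zg))^2 = (1 - \<gamma>) * d^2 + \<gamma> * q^2 - \<gamma> * (1 - \<gamma>) * (normM M ((zb - z) - (pb - p)))^2"
      using relax_id[of \<gamma> "zb - z" "pb - p"] zb pb by simp
    also have "\<dots> \<le> (1 - \<gamma>) * d^2 + \<gamma> * q^2"
      using True g by (simp add: mult_nonneg_nonneg)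
    also have "\<dots> \<le> (1 - \<gamma>) * d^2 + \<gamma> * (d^2 / (1 + \<alpha>^2))"
    proof -
      have "(1 + \<alpha>^2) * q^2 \<le> d^2" using h1 h2 by (simp add: algebra_simps)
      then have "q^2 \<le> d^2 / (1 + \<alpha>^2)" by (simp add: field_simps add_pos_nonneg)
      then show ?thesis using g by (intro add_left_mono mult_left_mono) auto
    qed
    also have "\<dots> = B * d^2"
    proof -
      have p1: "1 + \<alpha>^2 > 0" by (rule add_pos_nonneg) auto
      show ?thesis unfolding B_def m using p1 by (simp add: field_simps)
    qed
    finally show ?thesis using zsO by blast
  next
    case False
    have m: "min \<gamma> (2 * \<gamma> - \<gamma>^2) = 2 * \<gamma> - \<gamma>^2"
      using False by (simp add: min_def power2_eq_square)
    have "zg - pb = (1 - \<gamma>) *\<^sub>R (z - pb) + \<gamma> *\<^sub>R (p - pb)"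
      by (simp add: zg_def scaleR_diff_right scaleR_diff_left)
    then have "(normM M (pb - zg))^2 = (1 - \<gamma>) * (normM M (z - pb))^2 + \<gamma> * q^2 - \<gamma> * (1 - \<gamma>) * e^2"
      using relax_id[of \<gamma> "z - pb" "p - pb"] pb normM_commute[of pb zg] normM_commute[of pb p]
      unfolding e_def by simp
    also have "\<dots> \<le> (1 - \<gamma>) * d^2 + \<gamma> * (q^2 + (\<gamma> - 1) * e^2)"
    proof -
      have "d \<le> normM M (z - pb)" using distM_le[OF pb(1), of z] normM_commute[of pb z] d_def by simp
      then have "d^2 \<le> (normM M (z - pb))^2" using d0 by (simp add: power_mono)
      then have "(1 - \<gamma>) * (normM M (z - pb))^2 \<le> (1 - \<gamma>) * d^2" using False
        by (simp add: mult_left_mono_neg)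
      then show ?thesis by (simp add: algebra_simps)
    qed
    also have "\<dots> \<le> (1 - \<gamma>) * d^2 + \<gamma> * (d^2 * (1 - (2 - \<gamma>) * (\<alpha>^2 / (1 + \<alpha>^2))))"
      using arith_big[of \<gamma> \<alpha> q e d] False g alpha q0 e0 h1 h2 by (simp add: mult_left_mono)
    also have "\<dots> = B * d^2"
      unfolding B_def m by (simp add: field_simps power2_eq_square)
    finally show ?thesis using pb(1) by blast
  qed
  have dzg: "distM M zg \<Omega> \<le> sqrt B * d"
  proof -
    obtain zs where zs: "zs \<in> \<Omega>" "(normM M (zs - zg))^2 \<le> B * d^2" using zgb by blast
    have "normM M (zs - zg) \<le> sqrt (B * d^2)" using zs(2) by (simp add: real_le_rsqrt)
    also have "\<dots> = sqrt B * d" using d0 by (simp add: real_sqrt_mult)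
    finally show ?thesis using distM_le[OF zs(1), of zg] by linarith
  qed
  obtain w where w: "z' = \<gamma> *\<^sub>R w + (1 - \<gamma>) *\<^sub>R z"
      "normM M (w - p) \<le> min \<eta> (\<delta> * normM M (w - z))"
    using st unfolding igppa_step_def p_def by blast
  have wp: "normM M (w - p) \<le> \<delta> * e / (1 - \<delta>)"
  proof -
    have "normM M (w - p) \<le> \<delta> * normM M (w - z)" using w(2) by simp
    also have "\<dots> \<le> \<delta> * (normM M (w - p) + e)"
      using normM_triangle_diff[of w z p] normM_commute[of p z] dl unfolding e_def
      by (intro mult_left_mono) auto
    finally have "(1 - \<delta>) * normM M (w - p) \<le> \<delta> * e" by (simp add: algebra_simps)
    then show ?thesis using dl by (simp add: field_simps)
  qed
  obtain zh where zh: "zh \<in> \<Omega>" "normM M (zh - zg) = distM M zg \<Omega>" using proj_exists[OF cl ne'] by blast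
  have "distM M z' \<Omega> \<le> normM M (zh - z')" by (rule distM_le[OF zh(1)])
  also have "\<dots> \<le> normM M (zh - zg) + normM M (zg - z')" by (rule normM_triangle_diff)
  also have "zg - z' = \<gamma> *\<^sub>R (p - w)" by (simp add: w(1) zg_def scaleR_diff_right)
  also have "normM M (\<gamma> *\<^sub>R (p - w)) = \<gamma> * normM M (w - p)"
    using g normM_commute[of p w] by (simp add: normM_scale)
  also have "normM M (zh - zg) + \<gamma> * normM M (w - p) \<le> sqrt B * d + \<gamma> * (\<delta> * d / (1 - \<delta>))"
  proof (rule add_mono)
    show "normM M (zh - zg) \<le> sqrt B * d" using zh dzg by simp
    have "\<delta> * e / (1 - \<delta>) \<le> \<delta> * d / (1 - \<delta>)"
      using ed dl by (intro divide_right_mono mult_left_mono) auto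
    then show "\<gamma> * normM M (w - p) \<le> \<gamma> * (\<delta> * d / (1 - \<delta>))"
      using wp g by (intro mult_left_mono) auto
  qed
  also have "\<dots> = (sqrt B + \<gamma> * \<delta> / (1 - \<delta>)) * d" by (simp add: algebra_simps)
  also have "\<dots> \<le> ((1 / (1 - \<delta>)) * (sqrt (1 - min \<gamma> (2 * \<gamma> - \<gamma>^2) * \<alpha>^2 / (\<alpha>^2 + 1))
               + \<delta> * (min \<gamma> 1 / sqrt (\<alpha>^2 + 1) + 1))) * d"
    using arith_final[OF g alpha dl] d0 unfolding B_def by (intro mult_right_mono) auto
  finally show ?thesis unfolding d_def \<Omega>_def .
qed

end



lemma rho_nonneg:
  fixes g a dl :: real
  assumes g: "0 < g" "g < 2" and a: "a > 0" and dl: "0 \<le> dl" "dl < 1/2"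
  shows "0 \<le> (1 / (1 - dl)) * (sqrt (1 - min g (2 * g - g^2) * a^2 / (a^2 + 1)) + dl * (min g 1 / sqrt (a^2 + 1) + 1))"
proof -
  have "2 * g - g^2 = 1 - (g - 1)^2" by (simp add: power2_eq_square algebra_simps)
  then have "2 * g - g^2 \<le> 1" by simp
  then have "min g (2 * g - g^2) \<le> 1" by (simp add: min_le_iff_disj)
  then have "min g (2 * g - g^2) * a^2 \<le> 1 * a^2" by (intro mult_right_mono) auto
  moreover have "a^2 + 1 > 0" by (rule add_nonneg_pos) auto
  ultimately have "min g (2 * g - g^2) * a^2 / (a^2 + 1) \<le> 1"
    by (simp add: divide_le_eq)
  then have "0 \<le> sqrt (1 - min g (2 * g - g^2) * a^2 / (a^2 + 1))" by simp
  moreover have "0 \<le> dl * (min g 1 / sqrt (a^2 + 1) + 1)" using dl g by simp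
  moreover have "0 \<le> 1 / (1 - dl)" using dl by simp
  ultimately show ?thesis by simp
qed

theorem corollary1:
  fixes T :: "'a::euclidean_space \<Rightarrow> 'a set" and M :: "'a \<Rightarrow> 'a"
    and z :: "nat \<Rightarrow> 'a" and \<sigma> \<eta> :: "nat \<Rightarrow> real"
    and \<gamma> \<delta> r \<kappa> \<alpha> :: real and zbar0 :: 'a
  assumes T_mm: "maximal_monotone T" and Omega_ne: "zeros T \<noteq> {}"
    and M_pd: "self_adjoint_pd M" and M_max: "lambda_max M = 1"
    and gamma: "0 < \<gamma>" "\<gamma> < 2" and delta: "0 \<le> \<delta>" "\<delta> < 1/2"
    and sigma_nn: "\<forall>k. 0 \<le> \<sigma> k" and eta_nn: "\<forall>k. 0 \<le> \<eta> k"
    and eta_sum: "summable \<eta>" and sigma_inf: "(INF k. \<sigma> k) > 0"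
    and steps: "\<forall>k. igppa_step T M (z k) (\<sigma> k) (\<eta> k) \<delta> \<gamma> (z (Suc k))"
    and bms: "bounded_metric_subregular T"
    and zbar0: "zbar0 \<in> zeros T" "normM M (zbar0 - z 0) = distM M (z 0) (zeros T)"
    and r: "r \<ge> norm zbar0 + (1 / lambda_min M) * (distM M (z 0) (zeros T) + \<gamma> * suminf \<eta>)"
    and kappa: "\<kappa> > 0" "subreg_on_ball T r \<kappa>"
    and alpha: "\<alpha> > 0"
    and rho: "(1 / (1 - \<delta>)) * (sqrt (1 - min \<gamma> (2 * \<gamma> - \<gamma>^2) * \<alpha>^2 / (\<alpha>^2 + 1))
               + \<delta> * (min \<gamma> 1 / sqrt (\<alpha>^2 + 1) + 1)) < 1"
    and sigma_ge: "\<forall>k. \<sigma> k \<ge> \<kappa> * \<alpha>"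
  shows "\<forall>k. distM M (z k) (zeros T) \<le>
           ((1 / (1 - \<delta>)) * (sqrt (1 - min \<gamma> (2 * \<gamma> - \<gamma>^2) * \<alpha>^2 / (\<alpha>^2 + 1))
               + \<delta> * (min \<gamma> 1 / sqrt (\<alpha>^2 + 1) + 1))) ^ k * distM M (z 0) (zeros T)"
proof -
  interpret spd M by unfold_locales (rule M_pd)
  define \<rho> where "\<rho> = (1 / (1 - \<delta>)) * (sqrt (1 - min \<gamma> (2 * \<gamma> - \<gamma>^2) * \<alpha>^2 / (\<alpha>^2 + 1))
               + \<delta> * (min \<gamma> 1 / sqrt (\<alpha>^2 + 1) + 1))"
  define d0 where "d0 = distM M (z 0) (zeros T)"
  have sig0: "\<sigma> k > 0" for k
  proof -
    have "\<kappa> * \<alpha> > 0" using kappa alpha by simp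
    then show ?thesis using sigma_ge by (meson less_le_trans)
  qed
  have fej: "normM M (z k - zbar0) \<le> d0 + \<gamma> * (\<Sum>j<k. \<eta> j)" for k
  proof (induction k)
    case 0
    then show ?case using zbar0(2) normM_commute[of "z 0" zbar0] by (simp add: d0_def)
  next
    case (Suc k)
    have "normM M (z (Suc k) - zbar0) \<le> normM M (z k - zbar0) + \<gamma> * \<eta> k"
      using fejer(1)[OF T_mm Omega_ne sig0 gamma zbar0(1)] steps by blast
    also have "\<dots> \<le> d0 + \<gamma> * (\<Sum>j<k. \<eta> j) + \<gamma> * \<eta> k" using Suc by simp
    finally show ?case by (simp add: algebra_simps)
  qed
  have Rm: "normM M (z k - zbar0) \<le> d0 + \<gamma> * suminf \<eta>" for k
  proof -
    have "(\<Sum>j<k. \<eta> j) \<le> suminf \<eta>" using sum_le_suminf[OF eta_sum, of "{..<k}"] eta_nn by simp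
    then have "\<gamma> * (\<Sum>j<k. \<eta> j) \<le> \<gamma> * suminf \<eta>" using gamma by (simp add: mult_left_mono)
    then show ?thesis using fej[of k] by linarith
  qed
  have pr: "norm (resolventM T M (\<sigma> k) (z k)) \<le> r" for k
  proof -
    define p where "p = resolventM T M (\<sigma> k) (z k)"
    have "normM M (p - zbar0) \<le> normM M (z k - zbar0)"
      unfolding p_def by (rule fejer(2)[OF T_mm Omega_ne sig0 gamma zbar0(1)]) (use steps in blast)
    also have "\<dots> \<le> d0 + \<gamma> * suminf \<eta>" by (rule Rm)
    finally have "lambda_min M * norm (p - zbar0) \<le> d0 + \<gamma> * suminf \<eta>"
      using lmin_norm[OF M_max, of "p - zbar0"] by linarith
    then have "norm (p - zbar0) \<le> (1 / lambda_min M) * (d0 + \<gamma> * suminf \<eta>)"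
      using lmin_pos by (simp add: field_simps)
    moreover have "norm p \<le> norm zbar0 + norm (p - zbar0)" by (metis norm_triangle_sub add.commute)
    ultimately show ?thesis using r unfolding p_def d0_def by linarith
  qed
  have contr: "distM M (z (Suc k)) (zeros T) \<le> \<rho> * distM M (z k) (zeros T)" for k
    unfolding \<rho>_def
    by (rule contraction[OF T_mm Omega_ne M_max gamma delta kappa(1) alpha _ kappa(2) pr])
       (use sigma_ge steps in auto)
  have r0: "\<rho> \<ge> 0" unfolding \<rho>_def by (rule rho_nonneg[OF gamma alpha delta])
  have "distM M (z k) (zeros T) \<le> \<rho> ^ k * d0" for k
  proof (induction k)
    case 0 then show ?case by (simp add: d0_def)
  next
    case (Suc k)
    have "distM M (z (Suc k)) (zeros T) \<le> \<rho> * distM M (z k) (zeros T)" by (rule contr)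
    also have "\<dots> \<le> \<rho> * (\<rho> ^ k * d0)" using Suc r0 by (simp add: mult_left_mono)
    finally show ?case by (simp add: mult.assoc)
  qed
  then show ?thesis unfolding \<rho>_def d0_def by blast
qed


end
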